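(* Let $k\ge2$, $1\le m\le k-1$, and let $(k_1,\dots,k_m)$ be an ordered partition of $k$ into positive integers. Let $X_{k_1,\dots,k_m}$ be the set of $k$-admissible $m\times k$ matrices $D$ with entries $d_{ij}\in\{0,\pm1\}$, having exactly one nonzero entry in each column and exactly $k_i$ nonzero entries in the $i$-th row. Let $c>\frac12$ and $\delta>0$ be fixed. Then $$I(D,n,c,\delta)=\delta^{m-2kc}\prod_{i=1}^m\frac{1}{2k_ic-1}$$ for all $D\in X_{k_1,\dots,k_m}$ and all $n\ge1$.
   Context: Admissible matrices: for $k\ge2$, a division $(\nu,\mu)$ of $\{1,\dots,k\}$ consists of $1\le m\le k-1$ and strictly increasing sequences $\nu_1<\dots<\nu_m$, $\mu_1<\dots<\mu_{k-m}$ in $\{1,\dots,k\}$ which are disjoint. Given a positive integer $q$, an $m\times k$ integer matrix $D=(d_{ij})$ is $(\nu,\mu)$-admissible (with denominator $q$) if no column vanishes, the gcd of its entries is $1$, $d_{i\nu_j}=q\delta_{ij}$ for $1\le i,j\le m$, and $d_{i\mu_j}=0$ whenever $\mu_j<\nu_i$; $D$ is $k$-admissible if it is $(\nu,\mu)$-admissible for some division and some $q$ (for matrices with entries in $\{0,\pm1\}$ necessarily $q=1$). $V_n=\pi^{n/2}/\Gamma(\frac n2+1)$, $R_n(\delta)=(\delta/V_n)^{1/n}$, $f_{c,\delta}(\mathbf x)=|\mathbf x|^{-2cn}$ if $|\mathbf x|>R_n(\delta)$ and $0$ otherwise, and for a $k$-admissible $m\times k$ matrix $D$ with denominator $q$,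 $$I(D,n,c,\delta)=V_n^{-2kc}\int_{\mathbb R^n}\cdots\int_{\mathbb R^n}\prod_{j=1}^k f_{c,\delta}\Big(\sum_{i=1}^m\frac{d_{ij}}{q}\mathbf x_i\Big)\,d\mathbf x_1\cdots d\mathbf x_m.$$ *)

theory Defs
  imports "HOL-Analysis.Analysis"
begin

text \<open>Indices are 0-based: rows i < m, columns j < k. An m x k integer matrix is
  a function d :: nat => nat => int, only entries with i < m, j < k being relevant.\<close>

definition is_division :: "nat \<Rightarrow> nat \<Rightarrow> (nat \<Rightarrow> nat) \<Rightarrow> (nat \<Rightarrow> nat) \<Rightarrow> bool" where
  "is_division k m \<nu> \<mu> \<longleftrightarrow>
     1 \<le> m \<and> m \<le> k - 1 \<and>
     strict_mono_on {..<m} \<nu> \<and> \<nu> ` {..<m} \<subseteq> {..<k} \<and>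
     strict_mono_on {..<k - m} \<mu> \<and> \<mu> ` {..<k - m} \<subseteq> {..<k} \<and>
     \<nu> ` {..<m} \<inter> \<mu> ` {..<k - m} = {}"

definition admissible_div ::
  "nat \<Rightarrow> nat \<Rightarrow> int \<Rightarrow> (nat \<Rightarrow> nat) \<Rightarrow> (nat \<Rightarrow> nat) \<Rightarrow> (nat \<Rightarrow> nat \<Rightarrow> int) \<Rightarrow> bool" where
  "admissible_div m k q \<nu> \<mu> D \<longleftrightarrow>
     is_division k m \<nu> \<mu> \<and> q > 0 \<and>
     (\<forall>j<k. \<exists>i<m. D i j \<noteq> 0) \<and>
     Gcd {D i j | i j. i < m \<and> j < k} = 1 \<and>
     (\<forall>i<m. \<forall>j<m. D i (\<nu> j) = (if i = j then q else 0)) \<and>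
     (\<forall>i<m. \<forall>j<k - m. \<mu> j < \<nu> i \<longrightarrow> D i (\<mu> j) = 0)"

definition admissible_denom :: "nat \<Rightarrow> nat \<Rightarrow> int \<Rightarrow> (nat \<Rightarrow> nat \<Rightarrow> int) \<Rightarrow> bool" where
  "admissible_denom m k q D \<longleftrightarrow> (\<exists>\<nu> \<mu>. admissible_div m k q \<nu> \<mu> D)"

definition k_admissible :: "nat \<Rightarrow> nat \<Rightarrow> (nat \<Rightarrow> nat \<Rightarrow> int) \<Rightarrow> bool" where
  "k_admissible m k D \<longleftrightarrow> 2 \<le> k \<and> (\<exists>q. admissible_denom m k q D)"

definition X_set :: "nat \<Rightarrow> nat \<Rightarrow> (nat \<Rightarrow> nat) \<Rightarrow> (nat \<Rightarrow> nat \<Rightarrow> int) set" where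
  "X_set m k kk = {D. k_admissible m k D \<and>
      (\<forall>i<m. \<forall>j<k. D i j \<in> {0, 1, -1}) \<and>
      (\<forall>j<k. card {i. i < m \<and> D i j \<noteq> 0} = 1) \<and>
      (\<forall>i<m. card {j. j < k \<and> D i j \<noteq> 0} = kk i)}"

definition V :: "nat \<Rightarrow> real" where
  "V n = pi powr (real n / 2) / Gamma (real n / 2 + 1)"

definition R :: "nat \<Rightarrow> real \<Rightarrow> real" where
  "R n \<delta> = (\<delta> / V n) powr (1 / real n)"

definition f_cd :: "real \<Rightarrow> real \<Rightarrow> 'n::finite itself \<Rightarrow> real ^ 'n \<Rightarrow> real" where
  "f_cd c \<delta> _ x = (if norm x > R CARD('n) \<delta> then norm x powr (- 2 * c * real CARD('n)) else 0)"

text \<open>I(D,n,c,delta) with n = CARD('n), as a (nonnegative, possibly infinite)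
  integral over (R^n)^m, realised as the product measure over {..<m}.\<close>
definition I_int :: "nat \<Rightarrow> nat \<Rightarrow> int \<Rightarrow> (nat \<Rightarrow> nat \<Rightarrow> int) \<Rightarrow> 'n::finite itself \<Rightarrow> real \<Rightarrow> real \<Rightarrow> ennreal" where
  "I_int m k q D T c \<delta> =
     ennreal (V CARD('n) powr (- 2 * real k * c)) *
     (\<integral>\<^sup>+ x. ennreal (\<Prod>j<k. f_cd c \<delta> T
          (\<Sum>i<m. (real_of_int (D i j) / real_of_int q) *\<^sub>R (x i :: real ^ 'n)))
       \<partial>(PiM {..<m} (\<lambda>_. lborel)))"

end

theory Submission imports Defs begin

lemma radial:
  fixes a r0 :: real
  assumes a: "a > real DIM('a)" and r0: "r0 > 0"
  shows "(\<integral>\<^sup>+(x::'a::euclidean_space). ennreal (if r0 < norm x then norm x powr (-a) else 0) \<partial>lborel)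
     = ennreal (unit_ball_vol DIM('a) * real DIM('a) / (a - DIM('a)) * r0 powr (DIM('a) - a))"
proof -
  define n where "n = real DIM('a)"
  have n0: "n > 0" unfolding n_def by simp
  have a0: "a > 0" using a n0 n_def by linarith
  define vb where "vb = unit_ball_vol DIM('a)"
  have vb0: "vb > 0" unfolding vb_def by simp
  define h where "h = (\<lambda>(x::'a) (s::real). if r0 < norm x \<and> norm x \<le> s then ennreal (a * s powr (-a-1)) else 0)"
  have lim0: "((\<lambda>s::real. s powr b) \<longlongrightarrow> 0) at_top" if "b < 0" for b
    by (rule tendsto_neg_powr[OF that filterlim_ident])
  have pt: "ennreal (if r0 < norm x then norm x powr (-a) else 0) = (\<integral>\<^sup>+s. h x s \<partial>lborel)" for x
  proof (cases "r0 < norm x")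
    case True
    have "(\<integral>\<^sup>+s. h x s \<partial>lborel) = (\<integral>\<^sup>+s. ennreal (a * s powr (-a-1)) * indicator {norm x..} s \<partial>lborel)"
      by (rule nn_integral_cong) (auto simp: h_def True indicator_def)
    also have "\<dots> = ennreal (0 - (- (norm x powr (-a))))"
    proof (rule nn_integral_FTC_atLeast[where F="\<lambda>s. - (s powr (-a))"])
      show "(\<lambda>s. a * s powr (- a - 1)) \<in> borel_measurable borel" by measurable
      fix s assume s: "norm x \<le> s"
      then have s0: "s > 0" using True r0 by linarith
      show "((\<lambda>s. - (s powr (-a))) has_real_derivative a * s powr (- a - 1)) (at s)"
        using s0 by (auto intro!: derivative_eq_intros)
      show "0 \<le> a * s powr (- a - 1)" using a0 by simp
    next
      show "((\<lambda>s::real. - (s powr (-a))) \<longlongrightarrow> 0) at_top"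
        using tendsto_minus[OF lim0[of "-a"]] a0 by simp
    qed
    finally show ?thesis using True by simp
  next
    case False
    then show ?thesis by (simp add: h_def)
  qed
  have meas: "case_prod h \<in> borel_measurable (lborel \<Otimes>\<^sub>M lborel)"
    unfolding h_def by measurable
  have "(\<integral>\<^sup>+(x::'a). ennreal (if r0 < norm x then norm x powr (-a) else 0) \<partial>lborel)
     = (\<integral>\<^sup>+x. \<integral>\<^sup>+s. h x s \<partial>lborel \<partial>lborel)"
    by (simp add: pt)
  also have "\<dots> = (\<integral>\<^sup>+s. \<integral>\<^sup>+x. h x s \<partial>lborel \<partial>lborel)"
    by (rule pair_sigma_finite.Fubini'[symmetric, OF _ meas])
       (simp add: pair_sigma_finite_def sigma_finite_lborel)
  also have "\<dots> = (\<integral>\<^sup>+s. ennreal (a * vb * (s ^ DIM('a) - r0 ^ DIM('a)) * s powr (-a-1)) * indicator {r0..} s \<partial>lborel)"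
  proof (rule nn_integral_cong)
    fix s :: real
    have "(\<integral>\<^sup>+x. h x s \<partial>lborel) = (\<integral>\<^sup>+x. ennreal (a * s powr (-a-1)) * indicator (cball (0::'a) s - cball 0 r0) x \<partial>lborel)"
      by (rule nn_integral_cong) (auto simp: h_def indicator_def)
    also have "\<dots> = ennreal (a * s powr (-a-1)) * emeasure lborel (cball (0::'a) s - cball 0 r0)"
      by (rule nn_integral_cmult_indicator) simp
    also have "\<dots> = ennreal (a * vb * (s ^ DIM('a) - r0 ^ DIM('a)) * s powr (-a-1)) * indicator {r0..} s"
    proof (cases "r0 < s")
      case True
      have "emeasure lborel (cball (0::'a) s - cball 0 r0) = emeasure lborel (cball (0::'a) s) - emeasure lborel (cball (0::'a) r0)"
        using True r0 by (intro emeasure_Diff) (auto simp: emeasure_cball[OF less_imp_le[OF r0]])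
      also have "\<dots> = ennreal (vb * (s ^ DIM('a) - r0 ^ DIM('a)))"
        using True r0 vb0 by (simp add: emeasure_cball[OF less_imp_le[OF r0]] emeasure_cball[of s] vb_def ennreal_minus[symmetric] right_diff_distrib power_mono)
      finally show ?thesis using True a0 vb0 r0
        by (simp add: ennreal_mult'[symmetric] mult_ac)
    next
      case False
      then have e: "cball (0::'a) s - cball 0 r0 = {}" by auto
      have "s = r0 \<or> s < r0" using False by linarith
      then show ?thesis unfolding e by (auto simp: indicator_def)
    qed
    finally show "(\<integral>\<^sup>+x. h x s \<partial>lborel) = ennreal (a * vb * (s ^ DIM('a) - r0 ^ DIM('a)) * s powr (-a-1)) * indicator {r0..} s" .
  qed
  also have "\<dots> = ennreal (0 - vb * (a / (n - a) * r0 powr (n - a) + r0 ^ DIM('a) * r0 powr (-a)))"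
  proof (rule nn_integral_FTC_atLeast[where F="\<lambda>s. vb * (a / (n - a) * s powr (n - a) + r0 ^ DIM('a) * s powr (-a))"])
    show "(\<lambda>s. a * vb * (s ^ DIM('a) - r0 ^ DIM('a)) * s powr (- a - 1)) \<in> borel_measurable borel" by measurable
    fix s assume s: "r0 \<le> s"
    then have s0: "s > 0" using r0 by linarith
    have e: "s ^ DIM('a) * s powr (- a - 1) = s powr (n - a - 1)"
      using s0 by (simp add: n_def powr_realpow[symmetric] powr_add[symmetric]) (simp add: algebra_simps)
    show "((\<lambda>s. vb * (a / (n - a) * s powr (n - a) + r0 ^ DIM('a) * s powr (-a))) has_real_derivative a * vb * (s ^ DIM('a) - r0 ^ DIM('a)) * s powr (- a - 1)) (at s)"
    proof (rule DERIV_cong)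
      show "((\<lambda>s. vb * (a / (n - a) * s powr (n - a) + r0 ^ DIM('a) * s powr (-a))) has_real_derivative
         vb * (a / (n - a) * ((n - a) * s powr (n - a - 1)) + r0 ^ DIM('a) * (-a * s powr (-a - 1)))) (at s)"
        using s0 by (auto intro!: derivative_eq_intros)
      have nz: "n - a \<noteq> 0" using a n_def by simp
      have "vb * (a / (n - a) * ((n - a) * s powr (n - a - 1)) + r0 ^ DIM('a) * (-a * s powr (-a - 1)))
          = a * vb * (s powr (n - a - 1) - r0 ^ DIM('a) * s powr (-a - 1))"
        using nz by (simp add: field_simps)
      also have "\<dots> = a * vb * (s ^ DIM('a) * s powr (- a - 1) - r0 ^ DIM('a) * s powr (-a - 1))"
        by (simp only: e)
      also have "\<dots> = a * vb * (s ^ DIM('a) - r0 ^ DIM('a)) * s powr (- a - 1)"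
        by (simp add: algebra_simps)
      finally show "vb * (a / (n - a) * ((n - a) * s powr (n - a - 1)) + r0 ^ DIM('a) * (-a * s powr (-a - 1)))
          = a * vb * (s ^ DIM('a) - r0 ^ DIM('a)) * s powr (- a - 1)" .
    qed
    show "0 \<le> a * vb * (s ^ DIM('a) - r0 ^ DIM('a)) * s powr (- a - 1)"
      using s r0 a0 vb0 by (intro mult_nonneg_nonneg) (auto intro: power_mono)
  next
    show "((\<lambda>s. vb * (a / (n - a) * s powr (n - a) + r0 ^ DIM('a) * s powr (-a))) \<longlongrightarrow> 0) at_top"
      using tendsto_mult[OF tendsto_const[of vb] tendsto_add[OF tendsto_mult[OF tendsto_const[of "a/(n-a)"] lim0[of "n-a"]] tendsto_mult[OF tendsto_const[of "r0 ^ DIM('a)"] lim0[of "-a"]]]]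
        a a0 n_def by simp
  qed
  also have "\<dots> = ennreal (unit_ball_vol DIM('a) * real DIM('a) / (a - DIM('a)) * r0 powr (DIM('a) - a))"
  proof -
    have "r0 ^ DIM('a) * r0 powr (-a) = r0 powr (n - a)"
      using r0 by (simp add: n_def powr_realpow[symmetric] powr_add[symmetric])
    moreover have "n - a \<noteq> 0" using a n_def by simp
    moreover have "- (X / (n - a)) = X / (a - n)" for X
      by (simp only: minus_divide_right minus_diff_eq)
    ultimately show ?thesis using a
      by (simp add: vb_def n_def[symmetric] field_simps) (simp only: minus_divide_right minus_diff_eq)
  qed
  finally show ?thesis .
qed


lemma f_cd_nonneg: "0 \<le> f_cd c \<delta> T x"
  unfolding f_cd_def by simp

lemma f_cd_scale: "\<bar>d\<bar> = 1 \<Longrightarrow> f_cd c \<delta> T (d *\<^sub>R x) = f_cd c \<delta> T x"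
  unfolding f_cd_def by simp

lemma f_cd_meas[measurable]: "f_cd c \<delta> T \<in> borel_measurable borel"
  unfolding f_cd_def by measurable

lemma V_pos: "V n > 0"
  using unit_ball_vol_pos[of "real n"] unfolding V_def unit_ball_vol_def by simp

lemma factor_integral:
  fixes c \<delta> :: real and p :: nat
  assumes c: "c > 1/2" and d: "\<delta> > 0" and p: "p \<ge> 1"
  shows "(\<integral>\<^sup>+y. ennreal (f_cd c \<delta> TYPE('n::finite) y ^ p) \<partial>lborel)
     = ennreal (\<delta> powr (1 - 2 * c * p) * V CARD('n) powr (2 * c * p) * (1 / (2 * real p * c - 1)))"
proof -
  define n where "n = real CARD('n)"
  have n0: "n > 0" unfolding n_def by simp
  define a where "a = 2 * c * n * p"
  have pr: "real p \<ge> 1" using p by simp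
  have "2 * c * p \<ge> 2 * c * 1" using c pr by (intro mult_left_mono) auto
  then have cp: "2 * c * p > 1" using c by linarith
  have "a = (2 * c * p) * n" by (simp add: a_def mult_ac)
  also have "\<dots> > 1 * n" using cp n0 by (intro mult_strict_right_mono) auto
  finally have an: "a > n" by simp
  define r0 where "r0 = R CARD('n) \<delta>"
  have Vp: "V CARD('n) > 0" by (rule V_pos)
  have r0p: "r0 > 0" unfolding r0_def R_def using Vp d by simp
  have "(\<integral>\<^sup>+y. ennreal (f_cd c \<delta> TYPE('n::finite) y ^ p) \<partial>lborel)
      = (\<integral>\<^sup>+(y::real^'n). ennreal (if r0 < norm y then norm y powr (-a) else 0) \<partial>lborel)"
  proof (rule nn_integral_cong)
    fix y :: "real^'n"
    show "ennreal (f_cd c \<delta> TYPE('n) y ^ p) = ennreal (if r0 < norm y then norm y powr (-a) else 0)"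
    proof (cases "r0 < norm y")
      case True
      then have "norm y \<noteq> 0" using r0p by linarith
      then show ?thesis using True p unfolding f_cd_def r0_def[symmetric] a_def n_def
        by (simp add: powr_power mult_ac)
    next
      case False
      then show ?thesis using p unfolding f_cd_def r0_def[symmetric] by (simp add: power_0_left)
    qed
  qed
  also have "\<dots> = ennreal (unit_ball_vol DIM(real^'n) * real DIM(real^'n) / (a - DIM(real^'n)) * r0 powr (DIM(real^'n) - a))"
    by (rule radial) (use an r0p n_def in auto)
  also have "\<dots> = ennreal (\<delta> powr (1 - 2 * c * p) * V CARD('n) powr (2 * c * p) * (1 / (2 * real p * c - 1)))"
  proof -
    have uv: "unit_ball_vol DIM(real^'n) = V CARD('n)" by (simp add: V_def unit_ball_vol_def)
    have nd: "real DIM(real^'n) / (a - DIM(real^'n)) = 1 / (2 * real p * c - 1)"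
      using an n0 unfolding a_def n_def by (simp add: field_simps)
    have ex: "1 / n * (n - a) = 1 - 2 * c * p" using n0 by (simp add: a_def field_simps)
    have "r0 powr (DIM(real^'n) - a) = (\<delta> / V CARD('n)) powr (1 / n * (n - a))"
      unfolding r0_def R_def powr_powr n_def by simp
    also have "\<dots> = (\<delta> / V CARD('n)) powr (1 - 2 * c * p)" by (simp only: ex)
    also have "\<dots> = \<delta> powr (1 - 2 * c * p) * V CARD('n) powr (2 * c * p) / V CARD('n)"
      using Vp d by (simp add: powr_divide powr_diff field_simps)
    finally have rr: "r0 powr (DIM(real^'n) - a) = \<delta> powr (1 - 2 * c * p) * V CARD('n) powr (2 * c * p) / V CARD('n)" .
    have "V CARD('n) * real DIM(real^'n) / (a - DIM(real^'n)) * (\<delta> powr (1 - 2 * c * p) * V CARD('n) powr (2 * c * p) / V CARD('n))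
       = (\<delta> powr (1 - 2 * c * p) * V CARD('n) powr (2 * c * p)) * (real DIM(real^'n) / (a - DIM(real^'n)))"
      using Vp an n_def by (simp add: field_simps)
    then show ?thesis unfolding uv rr nd by simp
  qed
  finally show ?thesis .
qed


theorem proposition3p3:
  fixes k m :: nat and kk :: "nat \<Rightarrow> nat" and c \<delta> :: real
    and D :: "nat \<Rightarrow> nat \<Rightarrow> int" and q :: int
  assumes "2 \<le> k" and "1 \<le> m" and "m \<le> k - 1"
    and "\<forall>i<m. 1 \<le> kk i" and "(\<Sum>i<m. kk i) = k"
    and "c > 1/2" and "\<delta> > 0"
    and "D \<in> X_set m k kk"
    and "admissible_denom m k q D"
  shows "I_int m k q D TYPE('n::finite) c \<delta> =
           ennreal (\<delta> powr (real m - 2 * real k * c) * (\<Prod>i<m. 1 / (2 * real (kk i) * c - 1)))"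
proof -
  note kk1 = assms(4) and ksum = assms(5) and c = assms(6) and d = assms(7)
  have X: "\<forall>i<m. \<forall>j<k. D i j \<in> {0, 1, -1}" "\<forall>j<k. card {i. i < m \<and> D i j \<noteq> 0} = 1"
     "\<forall>i<m. card {j. j < k \<and> D i j \<noteq> 0} = kk i"
    using assms(8) unfolding X_set_def by auto
  obtain \<nu> \<mu> where adm: "admissible_div m k q \<nu> \<mu> D"
    using assms(9) unfolding admissible_denom_def by blast
  have q1: "q = 1"
  proof -
    have m0: "0 < m" using assms(2) by simp
    have "\<nu> 0 < k" using adm m0 unfolding admissible_div_def is_division_def by auto
    moreover have "D 0 (\<nu> 0) = q" "q > 0" using adm m0 unfolding admissible_div_def by auto
    ultimately show ?thesis using X(1) m0 by force
  qed
  have "\<forall>j. \<exists>i. j < k \<longrightarrow> {i'. i' < m \<and> D i' j \<noteq> 0} = {i}"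
    using X(2) by (metis card_1_singletonE)
  then obtain r where r: "\<And>j. j < k \<Longrightarrow> {i'. i' < m \<and> D i' j \<noteq> 0} = {r j}"
    by metis
  have rm: "r j < m" "D (r j) j \<noteq> 0" if "j < k" for j using r[OF that] by auto
  have rD: "D i j \<noteq> 0 \<longleftrightarrow> i = r j" if "j < k" "i < m" for i j using r[OF that(1)] that by auto
  have Dabs: "\<bar>real_of_int (D (r j) j)\<bar> = 1" if "j < k" for j
  proof -
    have "D (r j) j = 1 \<or> D (r j) j = -1" using X(1) rm[OF that] that by auto
    then show ?thesis by auto
  qed
  have rowc: "card {j. j \<in> {..<k} \<and> r j = i} = kk i" if "i < m" for i
  proof -
    have "{j. j \<in> {..<k} \<and> r j = i} = {j. j < k \<and> D i j \<noteq> 0}" using rD that by auto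
    then show ?thesis using X(3) that by simp
  qed
  define g where "g = f_cd c \<delta> TYPE('n)"
  have gnn: "0 \<le> g y" for y unfolding g_def by (rule f_cd_nonneg)
  have pt: "(\<Prod>j<k. g (\<Sum>i<m. (real_of_int (D i j) / real_of_int q) *\<^sub>R (x i :: real ^ 'n)))
      = (\<Prod>i<m. g (x i) ^ kk i)" for x
  proof -
    have "(\<Prod>j<k. g (\<Sum>i<m. (real_of_int (D i j) / real_of_int q) *\<^sub>R x i)) = (\<Prod>j<k. g (x (r j)))"
    proof (rule prod.cong[OF refl])
      fix j assume j: "j \<in> {..<k}"
      have "(\<Sum>i<m. (real_of_int (D i j) / real_of_int q) *\<^sub>R x i) = (\<Sum>i\<in>{r j}. (real_of_int (D i j) / real_of_int q) *\<^sub>R x i)"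
        by (rule sum.mono_neutral_right) (use j rm rD in auto)
      then show "g (\<Sum>i<m. (real_of_int (D i j) / real_of_int q) *\<^sub>R x i) = g (x (r j))"
        using Dabs[of j] j q1 unfolding g_def by (simp add: f_cd_scale)
    qed
    also have "\<dots> = (\<Prod>i<m. \<Prod>j\<in>{j. j \<in> {..<k} \<and> r j = i}. g (x (r j)))"
      by (rule prod.group[symmetric]) (use rm in auto)
    also have "\<dots> = (\<Prod>i<m. g (x i) ^ kk i)"
    proof (rule prod.cong[OF refl])
      fix i assume i: "i \<in> {..<m}"
      have "(\<Prod>j\<in>{j. j \<in> {..<k} \<and> r j = i}. g (x (r j))) = (\<Prod>j\<in>{j. j \<in> {..<k} \<and> r j = i}. g (x i))"
        by (rule prod.cong) auto
      then show "(\<Prod>j\<in>{j. j \<in> {..<k} \<and> r j = i}. g (x (r j))) = g (x i) ^ kk i"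
        using rowc i by simp
    qed
    finally show ?thesis .
  qed
  have psf: "product_sigma_finite (\<lambda>_::nat. lborel :: (real^'n) measure)"
    by (simp add: product_sigma_finite_def sigma_finite_lborel)
  define t where "t i = \<delta> powr (1 - 2 * c * kk i) * V CARD('n) powr (2 * c * kk i) * (1 / (2 * real (kk i) * c - 1))" for i
  have tnn: "t i \<ge> 0" if "i < m" for i
  proof -
    have "2 * real (kk i) * c \<ge> 2 * 1 * c" using kk1 that c by (intro mult_right_mono mult_left_mono) auto
    then have "2 * real (kk i) * c - 1 > 0" using c by linarith
    then show ?thesis unfolding t_def by (intro mult_nonneg_nonneg) auto
  qed
  have "(\<integral>\<^sup>+x. ennreal (\<Prod>j<k. g (\<Sum>i<m. (real_of_int (D i j) / real_of_int q) *\<^sub>R (x i :: real ^ 'n)))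
        \<partial>(PiM {..<m} (\<lambda>_. lborel)))
      = (\<integral>\<^sup>+x. (\<Prod>i\<in>{..<m}. (\<lambda>i y. ennreal (g y ^ kk i)) i (x i)) \<partial>(PiM {..<m} (\<lambda>_. lborel)))"
    by (simp add: pt prod_ennreal gnn)
  also have "\<dots> = (\<Prod>i\<in>{..<m}. integral\<^sup>N lborel ((\<lambda>i y. ennreal (g y ^ kk i)) i))"
    by (rule product_sigma_finite.product_nn_integral_prod[OF psf]) (auto simp: g_def)
  also have "\<dots> = (\<Prod>i\<in>{..<m}. ennreal (t i))"
    by (rule prod.cong[OF refl]) (use kk1 c d in \<open>simp add: g_def t_def factor_integral\<close>)
  also have "\<dots> = ennreal (\<Prod>i<m. t i)" by (rule prod_ennreal) (use tnn in auto)
  finally have int: "(\<integral>\<^sup>+x. ennreal (\<Prod>j<k. g (\<Sum>i<m. (real_of_int (D i j) / real_of_int q) *\<^sub>R (x i :: real ^ 'n)))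
        \<partial>(PiM {..<m} (\<lambda>_. lborel))) = ennreal (\<Prod>i<m. t i)" .
  have Vp: "V CARD('n) > 0" by (rule V_pos)
  have "(\<Prod>i<m. t i) = (\<Prod>i<m. \<delta> powr (1 - 2 * c * kk i)) * (\<Prod>i<m. V CARD('n) powr (2 * c * kk i))
        * (\<Prod>i<m. 1 / (2 * real (kk i) * c - 1))"
    unfolding t_def by (simp only: prod.distrib)
  also have "(\<Prod>i<m. \<delta> powr (1 - 2 * c * kk i)) = \<delta> powr (\<Sum>i<m. (1 - 2 * c * kk i))"
    using d by (simp add: powr_sum)
  also have "(\<Sum>i<m. (1 - 2 * c * kk i)) = real m - 2 * real k * c"
  proof -
    have "(\<Sum>i<m. (1 - 2 * c * kk i)) = real m - 2 * c * (\<Sum>i<m. real (kk i))"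
      by (simp add: sum_subtractf sum_distrib_left)
    also have "(\<Sum>i<m. real (kk i)) = real k" using ksum by (metis of_nat_sum)
    finally show ?thesis by simp
  qed
  also have "(\<Prod>i<m. V CARD('n) powr (2 * c * kk i)) = V CARD('n) powr (\<Sum>i<m. 2 * c * kk i)"
    using Vp by (simp add: powr_sum)
  also have "(\<Sum>i<m. 2 * c * kk i) = 2 * real k * c"
  proof -
    have "(\<Sum>i<m. 2 * c * kk i) = 2 * c * (\<Sum>i<m. real (kk i))"
      by (simp add: sum_distrib_left)
    also have "(\<Sum>i<m. real (kk i)) = real k" using ksum by (metis of_nat_sum)
    finally show ?thesis by simp
  qed
  finally have tprod: "(\<Prod>i<m. t i) = \<delta> powr (real m - 2 * real k * c) * V CARD('n) powr (2 * real k * c) * (\<Prod>i<m. 1 / (2 * real (kk i) * c - 1))" .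
  have "I_int m k q D TYPE('n) c \<delta> = ennreal (V CARD('n) powr (- 2 * real k * c)) * ennreal (\<Prod>i<m. t i)"
    unfolding I_int_def using int by (simp add: g_def)
  also have "\<dots> = ennreal (V CARD('n) powr (- 2 * real k * c) * (\<Prod>i<m. t i))"
    by (rule ennreal_mult'[symmetric]) simp
  also have "V CARD('n) powr (- 2 * real k * c) * (\<Prod>i<m. t i) = \<delta> powr (real m - 2 * real k * c) * (\<Prod>i<m. 1 / (2 * real (kk i) * c - 1))"
  proof -
    have "V CARD('n) powr (- 2 * real k * c) * V CARD('n) powr (2 * real k * c) = 1"
      using Vp by (simp add: powr_add[symmetric])
    then show ?thesis unfolding tprod by (simp add: mult_ac)
  qed
  finally show ?thesis .
qed

end
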